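(* Let $h:\mathcal X\times\mathcal S\to\mathcal Y$ be a measurable classifier with values in a finite set $\mathcal Y\subset\mathbb R$, and suppose $h(X,S)$ satisfies statistical parity, i.e. $h(X,S)$ is independent of $S$. Then there exists a transport-based counterfactual model $\Pi$ such that $h$ is $\Pi$-counterfactually fair.
   Context: $(X,S)$ is a random pair with $X$ valued in $\mathcal X\subseteq\mathbb R^d$ and $S$ valued in a finite set $\mathcal S\subset\mathbb R$ with $\mathbb P(S=s)>0$ for all $s$; $\mu_s:=\mathcal L(X\mid S=s)$. $\Pi(P,Q)$ denotes the set of probability measures on $\mathbb R^d\times\mathbb R^d$ with marginals $P$ and $Q$; $t(x,x'):=(x',x)$; $I$ is the identity and $(I\times I)(x)=(x,x)$; $T_\sharp P:=P\circ T^{-1}$. A transport-based counterfactual model is a collection $\Pi=\{\pi_{\langle s'|s\rangle}\}_{s,s'\in\mathcal S}$ of probability measures on $\mathbb R^d\times\mathbb R^d$ such that for all $s,s'$: (i) $\pi_{\langle s'|s\rangle}\in\Pi(\mu_s,\mu_{s'})$; (ii) $\pi_{\langle s|s\rangle}=(I\times I)_\sharp\mu_s$; (iii) $\pi_{\langle s|s'\rangle}=t_\sharp\pi_{\langle s'|s\rangle}$. A predictor $h$ is $\Pi$-counterfactually fair if for every $s,s'\in\mathcal S$ and $\pi_{\langle s'|s\rangle}$-almost every $(x,x')$, $h(x,s)=h(x',s')$. *)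

theory Defs
  imports "HOL-Probability.Probability"
begin

definition cond_law :: "'w measure \<Rightarrow> ('w \<Rightarrow> 'a::euclidean_space) \<Rightarrow> ('w \<Rightarrow> real) \<Rightarrow> real \<Rightarrow> 'a measure" where
  "cond_law M X S s = distr (uniform_measure M {\<omega> \<in> space M. S \<omega> = s}) borel X"

definition coupling :: "'a measure \<Rightarrow> 'b measure \<Rightarrow> ('a \<times> 'b) measure \<Rightarrow> bool" where
  "coupling P Q \<pi> \<longleftrightarrow> prob_space \<pi> \<and> sets \<pi> = sets (P \<Otimes>\<^sub>M Q) \<and>
     distr \<pi> P fst = P \<and> distr \<pi> Q snd = Q"

text \<open>Transport-based counterfactual model; CF s' s stands for pi_<s'|s>.\<close>
definition transport_cf_model :: "real set \<Rightarrow> (real \<Rightarrow> 'a measure) \<Rightarrow> (real \<Rightarrow> real \<Rightarrow> ('a \<times> 'a) measure) \<Rightarrow> bool" where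
  "transport_cf_model SS \<mu> CF \<longleftrightarrow> (\<forall>s\<in>SS. \<forall>s'\<in>SS.
      coupling (\<mu> s) (\<mu> s') (CF s' s) \<and>
      CF s s = distr (\<mu> s) (\<mu> s \<Otimes>\<^sub>M \<mu> s) (\<lambda>x. (x, x)) \<and>
      CF s s' = distr (CF s' s) (\<mu> s' \<Otimes>\<^sub>M \<mu> s) (\<lambda>(x, x'). (x', x)))"

definition cf_fair :: "real set \<Rightarrow> (real \<Rightarrow> real \<Rightarrow> ('a \<times> 'a) measure) \<Rightarrow> ('a \<Rightarrow> real \<Rightarrow> 'y) \<Rightarrow> bool" where
  "cf_fair SS CF h \<longleftrightarrow> (\<forall>s\<in>SS. \<forall>s'\<in>SS. AE p in CF s' s. h (fst p) s = h (snd p) s')"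

end

theory Submission imports Defs begin

definition Fd :: "('a \<Rightarrow> real) \<Rightarrow> ('b \<Rightarrow> real) \<Rightarrow> (real \<Rightarrow> real) \<Rightarrow> 'a \<times> 'b \<Rightarrow> ennreal" where
  "Fd g1 g2 q p = (if g1 (fst p) = g2 (snd p) then ennreal (1 / q (g1 (fst p))) else 0)"

lemma Fd_meas:
  assumes Y: "finite Y"
    and g1: "g1 \<in> measurable M1 (count_space Y)" and g2: "g2 \<in> measurable M2 (count_space Y)"
  shows "Fd g1 g2 q \<in> borel_measurable (M1 \<Otimes>\<^sub>M M2)"
proof -
  let ?H = "\<lambda>(a::real, b::real). if a = b then ennreal (1 / q a) else 0"
  have "(\<lambda>p. (g1 (fst p), g2 (snd p))) \<in> measurable (M1 \<Otimes>\<^sub>M M2) (count_space Y \<Otimes>\<^sub>M count_space Y)"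
    using g1 g2 by (intro measurable_Pair) (auto intro: measurable_compose[OF measurable_fst] measurable_compose[OF measurable_snd])
  then have m: "(\<lambda>p. (g1 (fst p), g2 (snd p))) \<in> measurable (M1 \<Otimes>\<^sub>M M2) (count_space (Y \<times> Y))"
    using pair_measure_count_space[OF Y Y] by simp
  have "?H \<in> borel_measurable (count_space (Y \<times> Y))" by simp
  from measurable_compose[OF m this] show ?thesis
    by (simp add: Fd_def[abs_def])
qed

lemma ennreal_inv_mult: "ennreal (1 / a) * ennreal a = (if a > 0 then 1 else 0)"
  by (cases "a > 0") (auto simp: ennreal_mult'' [symmetric] ennreal_neg)

lemma marg1:
  fixes M1 :: "'a measure" and M2 :: "'b measure"
  assumes P1: "prob_space M1" and P2: "prob_space M2" and Y: "finite Y"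
    and g1: "g1 \<in> measurable M1 (count_space Y)" and g2: "g2 \<in> measurable M2 (count_space Y)"
    and e1: "\<And>y. y \<in> Y \<Longrightarrow> emeasure M1 {x\<in>space M1. g1 x = y} = ennreal (q y)"
    and e2: "\<And>y. y \<in> Y \<Longrightarrow> emeasure M2 {x\<in>space M2. g2 x = y} = ennreal (q y)"
  shows "distr (density (M1 \<Otimes>\<^sub>M M2) (Fd g1 g2 q)) M1 fst = M1"
proof (rule measure_eqI)
  interpret p1: prob_space M1 by fact
  interpret p2: prob_space M2 by fact
  interpret pp: pair_sigma_finite M1 M2 by unfold_locales
  have Fm: "Fd g1 g2 q \<in> borel_measurable (M1 \<Otimes>\<^sub>M M2)" using Fd_meas[OF Y g1 g2] .
  show "sets (distr (density (M1 \<Otimes>\<^sub>M M2) (Fd g1 g2 q)) M1 fst) = sets M1" by simp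
  fix A assume "A \<in> sets (distr (density (M1 \<Otimes>\<^sub>M M2) (Fd g1 g2 q)) M1 fst)"
  then have A: "A \<in> sets M1" by simp
  have fm: "fst \<in> measurable (density (M1 \<Otimes>\<^sub>M M2) (Fd g1 g2 q)) M1"
    by (simp add: measurable_cong_sets[OF sets_density refl])
  have AS: "A \<times> space M2 \<in> sets (M1 \<Otimes>\<^sub>M M2)" using A by auto
  have g1Y: "\<And>x. x \<in> space M1 \<Longrightarrow> g1 x \<in> Y" using g1 by (auto simp: measurable_def)
  have g2s: "\<And>c. c \<in> Y \<Longrightarrow> {y\<in>space M2. g2 y = c} \<in> sets M2"
  proof -
    fix c assume "c \<in> Y"
    then have "g2 -` {c} \<inter> space M2 \<in> sets M2" using g2 by (auto intro: measurable_sets)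
    moreover have "g2 -` {c} \<inter> space M2 = {y\<in>space M2. g2 y = c}" by auto
    ultimately show "{y\<in>space M2. g2 y = c} \<in> sets M2" by simp
  qed
  have inner: "(\<integral>\<^sup>+ y. Fd g1 g2 q (x, y) * indicator (A \<times> space M2) (x, y) \<partial>M2)
      = indicator A x * (if q (g1 x) > 0 then 1 else 0)" if x: "x \<in> space M1" for x
  proof -
    have "(\<integral>\<^sup>+ y. Fd g1 g2 q (x, y) * indicator (A \<times> space M2) (x, y) \<partial>M2)
        = (\<integral>\<^sup>+ y. (indicator A x * ennreal (1 / q (g1 x))) * indicator {y\<in>space M2. g2 y = g1 x} y \<partial>M2)"
      by (intro nn_integral_cong) (auto simp: Fd_def indicator_def)
    also have "\<dots> = indicator A x * ennreal (1 / q (g1 x)) * ennreal (q (g1 x))"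
      using g2s[OF g1Y[OF x]] e2[OF g1Y[OF x]] by (simp add: nn_integral_cmult_indicator)
    also have "\<dots> = indicator A x * (if q (g1 x) > 0 then 1 else 0)"
      by (simp add: mult.assoc ennreal_inv_mult)
    finally show ?thesis .
  qed
  have ae: "AE x in M1. q (g1 x) > 0"
  proof -
    have "AE x in M1. \<forall>y\<in>Y. g1 x = y \<longrightarrow> q y > 0"
    proof (rule AE_finite_allI[OF Y])
      fix y assume y: "y \<in> Y"
      show "AE x in M1. g1 x = y \<longrightarrow> q y > 0"
      proof (cases "q y > 0")
        case True then show ?thesis by simp
      next
        case False
        have "{x\<in>space M1. g1 x = y} \<in> null_sets M1"
        proof -
          have "g1 -` {y} \<inter> space M1 \<in> sets M1" using g1 y by (auto intro: measurable_sets)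
          moreover have "g1 -` {y} \<inter> space M1 = {x\<in>space M1. g1 x = y}" by auto
          ultimately show ?thesis using e1[OF y] False by (auto simp: null_sets_def ennreal_neg)
        qed
        then show ?thesis by (rule AE_I') auto
      qed
    qed
    then show ?thesis using g1Y by (auto elim!: AE_mp intro!: AE_I2)
  qed
  have "emeasure (distr (density (M1 \<Otimes>\<^sub>M M2) (Fd g1 g2 q)) M1 fst) A
      = emeasure (density (M1 \<Otimes>\<^sub>M M2) (Fd g1 g2 q)) (A \<times> space M2)"
    using A sets.sets_into_space[OF A]
    by (subst emeasure_distr[OF fm A]) (auto intro!: arg_cong[where f="emeasure _"] simp: space_pair_measure)
  also have "\<dots> = (\<integral>\<^sup>+ p. Fd g1 g2 q p * indicator (A \<times> space M2) p \<partial>(M1 \<Otimes>\<^sub>M M2))"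
    by (rule emeasure_density[OF Fm AS])
  also have "\<dots> = (\<integral>\<^sup>+ x. \<integral>\<^sup>+ y. Fd g1 g2 q (x, y) * indicator (A \<times> space M2) (x, y) \<partial>M2 \<partial>M1)"
    using Fm AS by (intro p2.nn_integral_fst[symmetric]) auto
  also have "\<dots> = (\<integral>\<^sup>+ x. indicator A x * (if q (g1 x) > 0 then 1 else 0) \<partial>M1)"
    by (intro nn_integral_cong) (simp add: inner)
  also have "\<dots> = (\<integral>\<^sup>+ x. indicator A x \<partial>M1)"
    by (intro nn_integral_cong_AE) (use ae in \<open>auto elim!: AE_mp\<close>)
  also have "\<dots> = emeasure M1 A" using A by simp
  finally show "emeasure (distr (density (M1 \<Otimes>\<^sub>M M2) (Fd g1 g2 q)) M1 fst) A = emeasure M1 A" .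
qed


lemma Fd_swap: "Fd g1 g2 q p = Fd g2 g1 q (case p of (x, y) \<Rightarrow> (y, x))"
  by (cases p) (auto simp: Fd_def)

lemma swapF:
  fixes M1 :: "'a measure" and M2 :: "'b measure"
  assumes P1: "prob_space M1" and P2: "prob_space M2" and Y: "finite Y"
    and g1: "g1 \<in> measurable M1 (count_space Y)" and g2: "g2 \<in> measurable M2 (count_space Y)"
  shows "distr (density (M1 \<Otimes>\<^sub>M M2) (Fd g1 g2 q)) (M2 \<Otimes>\<^sub>M M1) (\<lambda>(x, y). (y, x))
       = density (M2 \<Otimes>\<^sub>M M1) (Fd g2 g1 q)"
proof -
  interpret p1: prob_space M1 by fact
  interpret p2: prob_space M2 by fact
  interpret pp: pair_sigma_finite M2 M1 by unfold_locales
  have "density (M2 \<Otimes>\<^sub>M M1) (Fd g2 g1 q)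
     = density (distr (M1 \<Otimes>\<^sub>M M2) (M2 \<Otimes>\<^sub>M M1) (\<lambda>(x, y). (y, x))) (Fd g2 g1 q)"
    using pp.distr_pair_swap by simp
  also have "\<dots> = distr (density (M1 \<Otimes>\<^sub>M M2) (\<lambda>p. Fd g2 g1 q (case p of (x, y) \<Rightarrow> (y, x)))) (M2 \<Otimes>\<^sub>M M1) (\<lambda>(x, y). (y, x))"
    by (rule density_distr[OF Fd_meas[OF Y g2 g1] measurable_pair_swap'])
  also have "(\<lambda>p. Fd g2 g1 q (case p of (x, y) \<Rightarrow> (y, x))) = Fd g1 g2 q"
    by (rule ext) (simp add: Fd_swap[of g1 g2])
  finally show ?thesis by simp
qed

lemma couplingF:
  fixes M1 :: "'a measure" and M2 :: "'b measure"
  assumes P1: "prob_space M1" and P2: "prob_space M2" and Y: "finite Y"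
    and g1: "g1 \<in> measurable M1 (count_space Y)" and g2: "g2 \<in> measurable M2 (count_space Y)"
    and e1: "\<And>y. y \<in> Y \<Longrightarrow> emeasure M1 {x\<in>space M1. g1 x = y} = ennreal (q y)"
    and e2: "\<And>y. y \<in> Y \<Longrightarrow> emeasure M2 {x\<in>space M2. g2 x = y} = ennreal (q y)"
  shows "coupling M1 M2 (density (M1 \<Otimes>\<^sub>M M2) (Fd g1 g2 q))"
proof -
  let ?\<pi> = "density (M1 \<Otimes>\<^sub>M M2) (Fd g1 g2 q)"
  interpret p1: prob_space M1 by fact
  have m1: "distr ?\<pi> M1 fst = M1" by (rule marg1[OF P1 P2 Y g1 g2 e1 e2])
  have "distr (distr ?\<pi> (M2 \<Otimes>\<^sub>M M1) (\<lambda>(x, y). (y, x))) M2 fst = M2"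
    unfolding swapF[OF P1 P2 Y g1 g2] by (rule marg1[OF P2 P1 Y g2 g1 e2 e1])
  moreover have "distr (distr ?\<pi> (M2 \<Otimes>\<^sub>M M1) (\<lambda>(x, y). (y, x))) M2 fst = distr ?\<pi> M2 snd"
    by (subst distr_distr) (auto simp: measurable_cong_sets[OF sets_density refl] comp_def split_beta)
  ultimately have m2: "distr ?\<pi> M2 snd = M2" by simp
  have "emeasure ?\<pi> (space ?\<pi>) = 1"
  proof -
    have "emeasure (distr ?\<pi> M1 fst) (space M1) = emeasure ?\<pi> (fst -` space M1 \<inter> space ?\<pi>)"
      by (rule emeasure_distr) (auto simp: measurable_cong_sets[OF sets_density refl])
    moreover have "fst -` space M1 \<inter> space ?\<pi> = space ?\<pi>" by (auto simp: space_pair_measure)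
    ultimately show ?thesis using m1 p1.emeasure_space_1 by simp
  qed
  then have "prob_space ?\<pi>" by (rule prob_spaceI)
  then show ?thesis unfolding coupling_def using m1 m2 by simp
qed

lemma coupling_diag:
  assumes P: "prob_space N"
  shows "coupling N N (distr N (N \<Otimes>\<^sub>M N) (\<lambda>x. (x, x)))"
proof -
  have m: "(\<lambda>x. (x, x)) \<in> measurable N (N \<Otimes>\<^sub>M N)" by (intro measurable_Pair) auto
  show ?thesis unfolding coupling_def
    using prob_space.prob_space_distr[OF P m] m
    by (auto simp: distr_distr comp_def)
qed

lemma swap_diag:
  "distr (distr N (N \<Otimes>\<^sub>M N) (\<lambda>x. (x, x))) (N \<Otimes>\<^sub>M N) (\<lambda>(x, y). (y, x)) = distr N (N \<Otimes>\<^sub>M N) (\<lambda>x. (x, x))"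
proof -
  have m: "(\<lambda>x. (x, x)) \<in> measurable N (N \<Otimes>\<^sub>M N)" by (intro measurable_Pair) auto
  show ?thesis using m by (subst distr_distr) (auto simp: comp_def)
qed


theorem proposition8:
  fixes M :: "'w measure" and X :: "'w \<Rightarrow> 'a::euclidean_space" and S :: "'w \<Rightarrow> real"
    and h :: "'a \<Rightarrow> real \<Rightarrow> real" and Y :: "real set"
  assumes "prob_space M"
    and "X \<in> borel_measurable M" and "S \<in> borel_measurable M"
    and "finite (S ` space M)"
    and "\<forall>s \<in> S ` space M. measure M {\<omega> \<in> space M. S \<omega> = s} > 0"
    and "(\<lambda>(x, s). h x s) \<in> borel_measurable (borel \<Otimes>\<^sub>M borel)"
    and "finite Y" and "\<forall>x s. h x s \<in> Y"
    and "prob_space.indep_var M borel (\<lambda>\<omega>. h (X \<omega>) (S \<omega>)) borel S"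
  shows "\<exists>CF. transport_cf_model (S ` space M) (cond_law M X S) CF
            \<and> cf_fair (S ` space M) CF h"
proof -
  interpret P: prob_space M by fact
  note Xm = assms(2) and Sm = assms(3) and hm = assms(6) and Y = assms(7) and hY = assms(8)
  note ind = assms(9)
  let ?SS = "S ` space M"
  let ?\<mu> = "cond_law M X S"
  define q where "q y = P.prob {\<omega>\<in>space M. h (X \<omega>) (S \<omega>) = y}" for y
  define B where "B s = {\<omega>\<in>space M. S \<omega> = s}" for s
  have Bs: "B s \<in> sets M" for s
  proof -
    have "S -` {s} \<inter> space M \<in> sets M" using Sm by (auto intro: measurable_sets)
    moreover have "S -` {s} \<inter> space M = B s" by (auto simp: B_def)
    ultimately show ?thesis by simp
  qed
  have hs: "(\<lambda>x. h x s) \<in> borel_measurable borel" for s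
  proof -
    have "(\<lambda>x. (x, s)) \<in> measurable borel (borel \<Otimes>\<^sub>M borel)" by (intro measurable_Pair) auto
    from measurable_compose[OF this hm] show ?thesis by simp
  qed
  have Zm: "(\<lambda>\<omega>. h (X \<omega>) (S \<omega>)) \<in> borel_measurable M"
  proof -
    have "(\<lambda>\<omega>. (X \<omega>, S \<omega>)) \<in> measurable M (borel \<Otimes>\<^sub>M borel)" using Xm Sm by (intro measurable_Pair) auto
    from measurable_compose[OF this hm] show ?thesis by simp
  qed
  have hsets: "{x. h x s = y} \<in> sets borel" for s y
  proof -
    have "(\<lambda>x. h x s) -` {y} \<inter> space borel \<in> sets borel" using hs[of s] by (rule measurable_sets) simp
    then show ?thesis by (simp add: vimage_def)
  qed
  have mu_prob: "prob_space (?\<mu> s)" and mu_sets: "sets (?\<mu> s) = sets borel" and mu_space: "space (?\<mu> s) = UNIV"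
    and mu_e: "\<And>y. emeasure (?\<mu> s) {x\<in>space (?\<mu> s). h x s = y} = ennreal (q y)"
    if s: "s \<in> ?SS" for s
  proof -
    have pos: "P.prob (B s) > 0" using assms(5) s unfolding B_def by blast
    have eB: "emeasure M (B s) = ennreal (P.prob (B s))" by (simp add: P.emeasure_eq_measure)
    have U: "prob_space (uniform_measure M (B s))"
      by (rule prob_space_uniform_measure) (use pos eB in auto)
    have XU: "X \<in> measurable (uniform_measure M (B s)) borel"
      using Xm by (simp add: measurable_cong_sets[OF sets_uniform_measure refl])
    show "prob_space (?\<mu> s)" unfolding cond_law_def B_def[symmetric]
      by (rule prob_space.prob_space_distr[OF U XU])
    show "sets (?\<mu> s) = sets borel" by (simp add: cond_law_def)
    show "space (?\<mu> s) = UNIV" by (simp add: cond_law_def)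
    fix y
    have "emeasure (?\<mu> s) {x\<in>space (?\<mu> s). h x s = y} = emeasure (uniform_measure M (B s)) (X -` {x. h x s = y} \<inter> space M)"
      unfolding cond_law_def B_def[symmetric]
      by (subst emeasure_distr[OF XU]) (auto simp: hsets)
    also have "\<dots> = emeasure M (B s \<inter> (X -` {x. h x s = y} \<inter> space M)) / emeasure M (B s)"
      using measurable_sets[OF Xm hsets[of s y]] by (intro emeasure_uniform_measure Bs) auto
    also have "B s \<inter> (X -` {x. h x s = y} \<inter> space M) = (\<lambda>\<omega>. (h (X \<omega>) (S \<omega>), S \<omega>)) -` ({y} \<times> {s}) \<inter> space M"
      by (auto simp: B_def)
    also have "emeasure M \<dots> = ennreal (q y * P.prob (B s))"
    proof -
      have "P.prob ((\<lambda>\<omega>. (h (X \<omega>) (S \<omega>), S \<omega>)) -` ({y} \<times> {s}) \<inter> space M)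
          = P.prob ((\<lambda>\<omega>. h (X \<omega>) (S \<omega>)) -` {y} \<inter> space M) * P.prob (S -` {s} \<inter> space M)"
        by (rule P.indep_varD[OF ind]) auto
      moreover have "(\<lambda>\<omega>. h (X \<omega>) (S \<omega>)) -` {y} \<inter> space M = {\<omega>\<in>space M. h (X \<omega>) (S \<omega>) = y}" by auto
      moreover have "S -` {s} \<inter> space M = B s" by (auto simp: B_def)
      ultimately show ?thesis by (simp add: P.emeasure_eq_measure q_def)
    qed
    finally show "emeasure (?\<mu> s) {x\<in>space (?\<mu> s). h x s = y} = ennreal (q y)"
      using pos eB by (simp add: divide_ennreal q_def)
  qed
  have gY: "(\<lambda>x. h x s) \<in> measurable (?\<mu> s) (count_space Y)" if s: "s \<in> ?SS" for s
    unfolding measurable_count_space_eq2[OF Y]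
  proof
    show "(\<lambda>x. h x s) \<in> space (?\<mu> s) \<rightarrow> Y" using hY by auto
    show "\<forall>a\<in>Y. (\<lambda>x. h x s) -` {a} \<inter> space (?\<mu> s) \<in> sets (?\<mu> s)"
      using hsets mu_sets[OF s] mu_space[OF s] by (auto simp: vimage_def)
  qed
  define CF where "CF s' s = (if s = s' then distr (?\<mu> s) (?\<mu> s \<Otimes>\<^sub>M ?\<mu> s) (\<lambda>x. (x, x))
      else density (?\<mu> s \<Otimes>\<^sub>M ?\<mu> s') (Fd (\<lambda>x. h x s) (\<lambda>x. h x s') q))" for s' s
  have "transport_cf_model ?SS ?\<mu> CF"
    unfolding transport_cf_model_def
  proof (intro ballI conjI)
    fix s s' assume s: "s \<in> ?SS" and s': "s' \<in> ?SS"
    show "coupling (?\<mu> s) (?\<mu> s') (CF s' s)"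
    proof (cases "s = s'")
      case True then show ?thesis using coupling_diag[OF mu_prob[OF s]] by (simp add: CF_def)
    next
      case False then show ?thesis unfolding CF_def
        using couplingF[OF mu_prob[OF s] mu_prob[OF s'] Y gY[OF s] gY[OF s'] mu_e[OF s] mu_e[OF s']] by simp
    qed
    show "CF s s = distr (?\<mu> s) (?\<mu> s \<Otimes>\<^sub>M ?\<mu> s) (\<lambda>x. (x, x))" by (simp add: CF_def)
    show "CF s s' = distr (CF s' s) (?\<mu> s' \<Otimes>\<^sub>M ?\<mu> s) (\<lambda>(x, x'). (x', x))"
    proof (cases "s = s'")
      case True then show ?thesis by (simp add: CF_def swap_diag)
    next
      case False then show ?thesis unfolding CF_def
        using swapF[OF mu_prob[OF s] mu_prob[OF s'] Y gY[OF s] gY[OF s'], of q] by auto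
    qed
  qed
  moreover have "cf_fair ?SS CF h"
    unfolding cf_fair_def
  proof (intro ballI)
    fix s s' assume s: "s \<in> ?SS" and s': "s' \<in> ?SS"
    show "AE p in CF s' s. h (fst p) s = h (snd p) s'"
    proof (cases "s = s'")
      case True
      have m: "(\<lambda>x. (x, x)) \<in> measurable (?\<mu> s) (?\<mu> s \<Otimes>\<^sub>M ?\<mu> s)" by (intro measurable_Pair) auto
      have "AE x in ?\<mu> s. h (fst (x, x)) s = h (snd (x, x)) s" by simp
      then have "AE p in distr (?\<mu> s) (?\<mu> s \<Otimes>\<^sub>M ?\<mu> s) (\<lambda>x. (x, x)). h (fst p) s = h (snd p) s"
      proof (subst AE_distr_iff[OF m])
        have "(\<lambda>p. (h (fst p) s, h (snd p) s)) \<in> measurable (?\<mu> s \<Otimes>\<^sub>M ?\<mu> s) (count_space Y \<Otimes>\<^sub>M count_space Y)"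
          using gY[OF s] by (intro measurable_Pair) (auto intro: measurable_compose[OF measurable_fst] measurable_compose[OF measurable_snd])
        then have mm: "(\<lambda>p. (h (fst p) s, h (snd p) s)) \<in> measurable (?\<mu> s \<Otimes>\<^sub>M ?\<mu> s) (count_space (Y \<times> Y))"
          using pair_measure_count_space[OF Y Y] by simp
        have "(\<lambda>p. (h (fst p) s, h (snd p) s)) -` {z\<in>Y \<times> Y. fst z = snd z} \<inter> space (?\<mu> s \<Otimes>\<^sub>M ?\<mu> s) \<in> sets (?\<mu> s \<Otimes>\<^sub>M ?\<mu> s)"
          by (rule measurable_sets[OF mm]) auto
        moreover have "(\<lambda>p. (h (fst p) s, h (snd p) s)) -` {z\<in>Y \<times> Y. fst z = snd z} \<inter> space (?\<mu> s \<Otimes>\<^sub>M ?\<mu> s)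
           = {p \<in> space (?\<mu> s \<Otimes>\<^sub>M ?\<mu> s). h (fst p) s = h (snd p) s}" using hY by auto
        ultimately show "{p \<in> space (?\<mu> s \<Otimes>\<^sub>M ?\<mu> s). h (fst p) s = h (snd p) s} \<in> sets (?\<mu> s \<Otimes>\<^sub>M ?\<mu> s)" by simp
      qed (rule \<open>AE x in ?\<mu> s. h (fst (x, x)) s = h (snd (x, x)) s\<close>)
      moreover have "CF s' s = distr (?\<mu> s) (?\<mu> s \<Otimes>\<^sub>M ?\<mu> s) (\<lambda>x. (x, x))" using True by (simp add: CF_def)
      ultimately show ?thesis using True by (simp only:)
    next
      case False
      have Fm: "Fd (\<lambda>x. h x s) (\<lambda>x. h x s') q \<in> borel_measurable (?\<mu> s \<Otimes>\<^sub>M ?\<mu> s')"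
        by (rule Fd_meas[OF Y gY[OF s] gY[OF s']])
      have "AE p in density (?\<mu> s \<Otimes>\<^sub>M ?\<mu> s') (Fd (\<lambda>x. h x s) (\<lambda>x. h x s') q). h (fst p) s = h (snd p) s'"
        unfolding AE_density[OF Fm] by (intro AE_I2) (auto simp: Fd_def split: if_splits)
      moreover have "CF s' s = density (?\<mu> s \<Otimes>\<^sub>M ?\<mu> s') (Fd (\<lambda>x. h x s) (\<lambda>x. h x s') q)" using False by (simp add: CF_def)
      ultimately show ?thesis by (simp only:)
    qed
  qed
  ultimately show ?thesis by blast
qed

end
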